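(* Let $a,b\in C^0(\mathbb{R})$ be even and positive, and let $G\in C^0(\mathbb{R})$ be even with $G(s)\ge G(M)=0$ for all $s\in\mathbb{R}$ and $G(s)>0$ for $s\in[0,M)$, for some $M>0$. Let $m>0$ and for $L>0$ set $\Phi_m(L):=\inf_{u\in H^1_m((-L,L))}\mathcal{E}(u,(-L,L))$. The following are equivalent: (i) $\liminf_{L\to+\infty}\Phi_m(L)=0$; (ii) there exists a sequence of bounded intervals $J_n=[\alpha_n,\beta_n]\subset\mathbb{R}$ ($\alpha_n<\beta_n$) such that $\int_{J_n}\frac1a\to+\infty$ and $\int_{J_n}b\to0$.
   Context: $H^1_m((-L,L)):=\{u\in H^1((-L,L)):u(-L)=-m,\ u(L)=m\}$ and $\mathcal{E}(u,(-L,L)):=\int_{-L}^L\{\tfrac12(u')^2a(x)+G(u)b(x)\}\,dx$. *)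

theory Defs
  imports "HOL-Analysis.Analysis" "HOL-Library.Extended_Real"
begin

text \<open>One-dimensional Sobolev space H^1((-L,L)), identified (as usual) with its
  continuous representatives: u is in H^1 with weak derivative g iff g is in L^2(-L,L)
  and u(x) = u(-L) + integral from -L to x of g, for x in [-L,L].\<close>
definition H1_weak :: "real \<Rightarrow> (real \<Rightarrow> real) \<Rightarrow> (real \<Rightarrow> real) \<Rightarrow> bool" where
  "H1_weak L u g \<longleftrightarrow>
     g absolutely_integrable_on {-L..L} \<and>
     (\<lambda>x. (g x)\<^sup>2) integrable_on {-L..L} \<and>
     (\<forall>x\<in>{-L..L}. u x = u (-L) + integral {-L..x} g)"

definition H1m :: "real \<Rightarrow> real \<Rightarrow> (real \<Rightarrow> real) \<Rightarrow> (real \<Rightarrow> real) \<Rightarrow> bool" where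
  "H1m m L u g \<longleftrightarrow> H1_weak L u g \<and> u (-L) = - m \<and> u L = m"

definition energy :: "(real \<Rightarrow> real) \<Rightarrow> (real \<Rightarrow> real) \<Rightarrow> (real \<Rightarrow> real)
    \<Rightarrow> real \<Rightarrow> (real \<Rightarrow> real) \<Rightarrow> (real \<Rightarrow> real) \<Rightarrow> real" where
  "energy a b G L u g = integral {-L..L} (\<lambda>x. (1/2) * (g x)\<^sup>2 * a x + G (u x) * b x)"

definition Phi :: "(real \<Rightarrow> real) \<Rightarrow> (real \<Rightarrow> real) \<Rightarrow> (real \<Rightarrow> real) \<Rightarrow> real \<Rightarrow> real \<Rightarrow> real" where
  "Phi a b G m L = Inf {energy a b G L u g | u g. H1m m L u g}"

end

theory Submission
  imports Defs
begin

lemma H1_facts: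
  fixes a b G u g :: "real \<Rightarrow> real"
  assumes a: "continuous_on UNIV a" and b: "continuous_on UNIV b" and G: "continuous_on UNIV G"
    and H: "H1_weak L u g"
  shows "continuous_on {-L..L} u" "g integrable_on {-L..L}"
    "(\<lambda>x. (1/2) * (g x)\<^sup>2 * a x) integrable_on {-L..L}"
    "(\<lambda>x. G (u x) * b x) integrable_on {-L..L}"
proof -
  have gai: "g absolutely_integrable_on {-L..L}" and g2: "(\<lambda>x. (g x)\<^sup>2) integrable_on {-L..L}"
    and ux: "\<And>x. x \<in> {-L..L} \<Longrightarrow> u x = u (-L) + integral {-L..x} g"
    using H unfolding H1_weak_def by blast+
  show gi: "g integrable_on {-L..L}" using gai absolutely_integrable_on_def by blast
  have "continuous_on {-L..L} (\<lambda>x. u (-L) + integral {-L..x} g)"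
    by (intro continuous_intros indefinite_integral_continuous_1 gi)
  then show uc: "continuous_on {-L..L} u"
    by (rule continuous_on_eq) (metis ux)
  have g2a: "(\<lambda>x. (g x)\<^sup>2) absolutely_integrable_on {-L..L}"
    by (rule nonnegative_absolutely_integrable_1[OF g2]) simp
  have ac: "continuous_on {-L..L} (\<lambda>x. (1/2) * a x)"
    by (intro continuous_intros continuous_on_subset[OF a]) auto
  have "(\<lambda>x. ((1/2) * a x) * (g x)\<^sup>2) absolutely_integrable_on {-L..L}"
  proof (rule absolutely_integrable_bounded_measurable_product_real[OF _ _ _ g2a])
    show "(\<lambda>x. (1/2) * a x) \<in> borel_measurable (lebesgue_on {-L..L})"
      by (rule continuous_imp_measurable_on_sets_lebesgue[OF ac]) simp
    show "{-L..L} \<in> sets lebesgue" by simp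
    show "bounded ((\<lambda>x. (1/2) * a x) ` {-L..L})"
      by (intro compact_imp_bounded compact_continuous_image ac) simp
  qed
  then have "(\<lambda>x. ((1/2) * a x) * (g x)\<^sup>2) integrable_on {-L..L}"
    using absolutely_integrable_on_def by blast
  then show "(\<lambda>x. (1/2) * (g x)\<^sup>2 * a x) integrable_on {-L..L}"
    by (rule integrable_eq) (simp add: algebra_simps)
  have "continuous_on {-L..L} (\<lambda>x. G (u x) * b x)"
    by (intro continuous_intros continuous_on_compose2[OF G uc] continuous_on_subset[OF b]) auto
  then show "(\<lambda>x. G (u x) * b x) integrable_on {-L..L}"
    by (rule integrable_continuous_interval)
qed


lemma liminf_zero_imp:
  fixes f :: "real \<Rightarrow> real"
  assumes "Liminf at_top (\<lambda>L. ereal (f L)) = 0" and "\<epsilon> > 0"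
  shows "\<exists>L\<ge>T. f L < \<epsilon>"
proof (rule ccontr)
  assume "\<not> (\<exists>L\<ge>T. f L < \<epsilon>)"
  then have "eventually (\<lambda>L. ereal \<epsilon> \<le> ereal (f L)) at_top"
    unfolding eventually_at_top_linorder by (auto simp: not_less)
  then have "ereal \<epsilon> \<le> Liminf at_top (\<lambda>L. ereal (f L))" by (rule Liminf_bounded)
  then show False using assms by simp
qed

lemma liminf_zero_intro:
  fixes f :: "real \<Rightarrow> real"
  assumes ev: "eventually (\<lambda>L. 0 \<le> f L) at_top"
    and sm: "\<And>T \<epsilon>. \<epsilon> > 0 \<Longrightarrow> \<exists>L\<ge>T. f L \<le> \<epsilon>"
  shows "Liminf at_top (\<lambda>L. ereal (f L)) = 0"
proof (rule antisym)
  have "eventually (\<lambda>L. ereal 0 \<le> ereal (f L)) at_top" using ev by simp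
  then show "0 \<le> Liminf at_top (\<lambda>L. ereal (f L))"
    using Liminf_bounded zero_ereal_def by metis
  show "Liminf at_top (\<lambda>L. ereal (f L)) \<le> 0"
    unfolding Liminf_def
  proof (rule SUP_least)
    fix P :: "real \<Rightarrow> bool" assume "P \<in> {P. eventually P at_top}"
    then obtain N where N: "\<And>L. L \<ge> N \<Longrightarrow> P L"
      by (auto simp: eventually_at_top_linorder)
    show "Inf ((\<lambda>L. ereal (f L)) ` Collect P) \<le> 0"
    proof (rule ereal_le_epsilon2)
      fix e :: real assume e: "0 < e"
      obtain L where L: "L \<ge> N" "f L \<le> e" using sm[OF e] by blast
      have "Inf ((\<lambda>L. ereal (f L)) ` Collect P) \<le> ereal (f L)"
        by (rule INF_lower) (use N L in auto)
      also have "\<dots> \<le> 0 + ereal e" using L by simp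
      finally show "Inf ((\<lambda>L. ereal (f L)) ` Collect P) \<le> 0 + ereal e" .
    qed
  qed
qed

lemma icm:
  fixes f :: "real \<Rightarrow> real"
  assumes "f integrable_on S" shows "(\<lambda>x. c * f x) integrable_on S"
  using integrable_on_cmult_left[OF assms, of c] by simp

lemma amgm_pt:
  fixes t a g :: real
  assumes "t > 0" "a > 0"
  shows "g \<le> t * ((1/2) * g\<^sup>2 * a) + (1 / (2*t)) * (1 / a)"
proof -
  have "0 \<le> (t*a*g - 1)\<^sup>2" by simp
  then have "2*t*a*g \<le> (t*a*g)\<^sup>2 + 1" by (simp add: power2_eq_square algebra_simps)
  then have "2*t*a*g / (2*t*a) \<le> ((t*a*g)\<^sup>2 + 1) / (2*t*a)"
    using assms by (intro divide_right_mono) auto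
  then show ?thesis using assms by (simp add: field_simps power2_eq_square)
qed

locale setting =
  fixes a b G :: "real \<Rightarrow> real" and M m :: real
  assumes ca: "continuous_on UNIV a" and cb: "continuous_on UNIV b" and cG: "continuous_on UNIV G"
    and ea: "\<And>x. a (-x) = a x" and eb: "\<And>x. b (-x) = b x" and eG: "\<And>x. G (-x) = G x"
    and apos: "\<And>x. a x > 0" and bpos: "\<And>x. b x > 0"
    and Mpos: "M > 0" and GM: "G M = 0" and Gge: "\<And>s. G s \<ge> G M" and Gpos: "\<And>s. 0 \<le> s \<Longrightarrow> s < M \<Longrightarrow> G s > 0"
    and mpos: "m > 0"
begin

lemma G_nonneg: "G s \<ge> 0" using Gge[of s] GM by simp

lemma H1m_nonempty:
  assumes L: "L > 0"
  shows "H1m m L (\<lambda>x. -m + m / L * (x + L)) (\<lambda>x. m / L)"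
  using L unfolding H1m_def H1_weak_def
  by (auto simp: field_simps)

lemma energy_facts:
  assumes H: "H1m m L u g"
  shows "0 \<le> energy a b G L u g"
    "energy a b G L u g = integral {-L..L} (\<lambda>x. (1/2) * (g x)\<^sup>2 * a x) + integral {-L..L} (\<lambda>x. G (u x) * b x)"
    "0 \<le> integral {-L..L} (\<lambda>x. (1/2) * (g x)\<^sup>2 * a x)"
    "0 \<le> integral {-L..L} (\<lambda>x. G (u x) * b x)"
proof -
  have H1: "H1_weak L u g" using H unfolding H1m_def by blast
  note f = H1_facts[OF ca cb cG H1]
  show e: "energy a b G L u g = integral {-L..L} (\<lambda>x. (1/2) * (g x)\<^sup>2 * a x) + integral {-L..L} (\<lambda>x. G (u x) * b x)"
    unfolding energy_def by (rule integral_add[OF f(3) f(4)])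
  show i1: "0 \<le> integral {-L..L} (\<lambda>x. (1/2) * (g x)\<^sup>2 * a x)"
    by (rule integral_nonneg[OF f(3)]) (simp add: less_imp_le[OF apos])
  show i2: "0 \<le> integral {-L..L} (\<lambda>x. G (u x) * b x)"
    by (rule integral_nonneg[OF f(4)]) (simp add: G_nonneg less_imp_le[OF bpos])
  show "0 \<le> energy a b G L u g" using e i1 i2 by simp
qed

lemma Phi_facts:
  assumes L: "L > 0"
  shows "0 \<le> Phi a b G m L" "\<And>u g. H1m m L u g \<Longrightarrow> Phi a b G m L \<le> energy a b G L u g"
    "\<And>y. Phi a b G m L < y \<Longrightarrow> \<exists>u g. H1m m L u g \<and> energy a b G L u g < y"
proof -
  let ?S = "{energy a b G L u g | u g. H1m m L u g}"
  have ne: "?S \<noteq> {}" using H1m_nonempty[OF L] by blast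
  have bdd: "bdd_below ?S" unfolding bdd_below_def using energy_facts(1) by blast
  show "0 \<le> Phi a b G m L" unfolding Phi_def
    by (rule cInf_greatest[OF ne]) (use energy_facts(1) in blast)
  show "Phi a b G m L \<le> energy a b G L u g" if "H1m m L u g" for u g
    unfolding Phi_def by (rule cInf_lower[OF _ bdd]) (use that in blast)
  show "\<exists>u g. H1m m L u g \<and> energy a b G L u g < y" if "Phi a b G m L < y" for y
    using cInf_lessD[OF ne, of y] that unfolding Phi_def by blast
qed


lemma crossing:
  assumes L: "L > 0" and H: "H1m m L u g" and E: "energy a b G L u g < \<epsilon>"
    and d: "0 < \<delta>" "\<delta> < m" and c: "c > 0" "\<And>s. 0 \<le> s \<Longrightarrow> s \<le> \<delta> \<Longrightarrow> c \<le> G s"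
  shows "\<exists>\<alpha> \<beta>. \<alpha> < \<beta> \<and> \<delta>\<^sup>2 / (2*\<epsilon>) \<le> integral {\<alpha>..\<beta>} (\<lambda>x. 1 / a x)
     \<and> integral {\<alpha>..\<beta>} b \<le> \<epsilon> / c"
proof -
  have H1: "H1_weak L u g" and um: "u (-L) = -m" and uL: "u L = m" using H unfolding H1m_def by blast+
  have ux: "\<And>x. x \<in> {-L..L} \<Longrightarrow> u x = u (-L) + integral {-L..x} g"
    using H1 unfolding H1_weak_def by blast
  note f = H1_facts[OF ca cb cG H1]
  note ef = energy_facts[OF H]
  have eps: "\<epsilon> > 0" using ef(1) E by linarith
  define A where "A = {-L..L} \<inter> u -` {\<delta>..}"
  have "closed A" unfolding A_def by (rule continuous_closed_preimage[OF f(1)]) auto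
  then have "compact A" unfolding A_def by (meson bounded_Int bounded_closed_interval compact_eq_bounded_closed)
  moreover have "L \<in> A" using L d uL unfolding A_def by auto
  ultimately obtain \<beta> where \<beta>A: "\<beta> \<in> A" and \<beta>min: "\<And>t. t \<in> A \<Longrightarrow> \<beta> \<le> t"
    using compact_attains_inf[of A] by blast
  have \<beta>L: "-L \<le> \<beta>" "\<beta> \<le> L" "\<delta> \<le> u \<beta>" using \<beta>A unfolding A_def by auto
  have ucb: "continuous_on {-L..\<beta>} u" by (rule continuous_on_subset[OF f(1)]) (use \<beta>L in auto)
  define B where "B = {-L..\<beta>} \<inter> u -` {..0}"
  have "closed B" unfolding B_def by (rule continuous_closed_preimage[OF ucb]) auto
  then have "compact B" unfolding B_def by (meson bounded_Int bounded_closed_interval compact_eq_bounded_closed)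
  moreover have "-L \<in> B" using L d um \<beta>L unfolding B_def by auto
  ultimately obtain \<alpha> where \<alpha>B: "\<alpha> \<in> B" and \<alpha>max: "\<And>t. t \<in> B \<Longrightarrow> t \<le> \<alpha>"
    using compact_attains_sup[of B] by blast
  have \<alpha>L: "-L \<le> \<alpha>" "\<alpha> \<le> \<beta>" "u \<alpha> \<le> 0" using \<alpha>B unfolding B_def by auto
  have ab: "\<alpha> < \<beta>" proof -
    have "\<alpha> \<noteq> \<beta>" using \<alpha>L \<beta>L d by auto
    then show ?thesis using \<alpha>L by auto
  qed
  obtain y where y: "-L \<le> y" "y \<le> \<beta>" "u y = \<delta>"
    using IVT'[of u "-L" \<delta> \<beta>, OF _ \<beta>L(3) \<beta>L(1) ucb] um d by auto
  have "y \<in> A" using y \<beta>L unfolding A_def by auto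
  then have ub: "u \<beta> = \<delta>" using \<beta>min[of y] y by auto
  have ucab: "continuous_on {\<alpha>..\<beta>} u" by (rule continuous_on_subset[OF ucb]) (use \<alpha>L in auto)
  obtain z where z: "\<alpha> \<le> z" "z \<le> \<beta>" "u z = 0"
    using IVT'[of u \<alpha> 0 \<beta>, OF \<alpha>L(3) _ \<alpha>L(2) ucab] \<beta>L d by auto
  have "z \<in> B" using z \<alpha>L unfolding B_def by auto
  then have ua: "u \<alpha> = 0" using \<alpha>max[of z] z by auto
  have urange: "0 \<le> u x \<and> u x \<le> \<delta>" if x: "x \<in> {\<alpha>..\<beta>}" for x
  proof
    show "u x \<le> \<delta>"
    proof (cases "x = \<beta>")
      case False
      then have "x \<notin> A" using \<beta>min[of x] x by auto
      then show ?thesis using x \<alpha>L \<beta>L unfolding A_def by auto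
    qed (use ub in auto)
    show "0 \<le> u x"
    proof (cases "x = \<alpha>")
      case False
      then have "x \<notin> B" using \<alpha>max[of x] x by auto
      then show ?thesis using x \<alpha>L \<beta>L unfolding B_def by auto
    qed (use ua in auto)
  qed
  have sub: "{\<alpha>..\<beta>} \<subseteq> {-L..L}" using \<alpha>L \<beta>L by auto
  have gi: "g integrable_on {-L..\<beta>}" by (rule integrable_subinterval_real[OF f(2)]) (use \<beta>L in auto)
  have "integral {-L..\<alpha>} g + integral {\<alpha>..\<beta>} g = integral {-L..\<beta>} g"
    by (rule Henstock_Kurzweil_Integration.integral_combine[OF \<alpha>L(1) \<alpha>L(2) gi])
  moreover have "u \<beta> = u (-L) + integral {-L..\<beta>} g" using ux[of \<beta>] \<beta>L by auto
  moreover have "u \<alpha> = u (-L) + integral {-L..\<alpha>} g" using ux[of \<alpha>] \<alpha>L \<beta>L by auto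
  ultimately have intg: "integral {\<alpha>..\<beta>} g = \<delta>" using ua ub by linarith
  have i1: "(\<lambda>x. (1/2) * (g x)\<^sup>2 * a x) integrable_on {\<alpha>..\<beta>}"
    by (rule integrable_subinterval_real[OF f(3) sub])
  have i2: "(\<lambda>x. G (u x) * b x) integrable_on {\<alpha>..\<beta>}"
    by (rule integrable_subinterval_real[OF f(4) sub])
  have P: "integral {\<alpha>..\<beta>} (\<lambda>x. (1/2) * (g x)\<^sup>2 * a x) < \<epsilon>"
  proof -
    have "integral {\<alpha>..\<beta>} (\<lambda>x. (1/2) * (g x)\<^sup>2 * a x) \<le> integral {-L..L} (\<lambda>x. (1/2) * (g x)\<^sup>2 * a x)"
      by (rule integral_subset_le[OF sub i1 f(3)]) (simp add: less_imp_le[OF apos])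
    then show ?thesis using ef E by linarith
  qed
  have Q: "integral {\<alpha>..\<beta>} (\<lambda>x. G (u x) * b x) < \<epsilon>"
  proof -
    have "integral {\<alpha>..\<beta>} (\<lambda>x. G (u x) * b x) \<le> integral {-L..L} (\<lambda>x. G (u x) * b x)"
      by (rule integral_subset_le[OF sub i2 f(4)]) (simp add: G_nonneg less_imp_le[OF bpos])
    then show ?thesis using ef E by linarith
  qed
  have ca': "continuous_on {\<alpha>..\<beta>} (\<lambda>x. 1 / a x)"
    by (intro continuous_on_divide continuous_on_const continuous_on_subset[OF ca]) (auto simp: apos less_imp_neq[symmetric])
  have ia: "(\<lambda>x. 1 / a x) integrable_on {\<alpha>..\<beta>}" by (rule integrable_continuous_interval[OF ca'])
  have ib: "b integrable_on {\<alpha>..\<beta>}"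
    by (rule integrable_continuous_interval, rule continuous_on_subset[OF cb]) auto
  have "integral {\<alpha>..\<beta>} (\<lambda>x. c * b x) \<le> integral {\<alpha>..\<beta>} (\<lambda>x. G (u x) * b x)"
    by (rule integral_le[OF icm[OF ib] i2])
       (use urange c less_imp_le[OF bpos] in \<open>auto intro: mult_right_mono\<close>)
  then have "c * integral {\<alpha>..\<beta>} b \<le> \<epsilon>" using Q by simp
  then have Bb: "integral {\<alpha>..\<beta>} b \<le> \<epsilon> / c" using c by (simp add: field_simps)
  define t where "t = \<delta> / (2*\<epsilon>)"
  have t: "t > 0" unfolding t_def using d eps by simp
  have "integral {\<alpha>..\<beta>} g \<le> integral {\<alpha>..\<beta>} (\<lambda>x. t * ((1/2) * (g x)\<^sup>2 * a x) + (1 / (2*t)) * (1 / a x))"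
    by (rule integral_le[OF integrable_subinterval_real[OF f(2) sub] integrable_add[OF icm[OF i1] icm[OF ia]]])
       (rule amgm_pt[OF t apos])
  also have "\<dots> = t * integral {\<alpha>..\<beta>} (\<lambda>x. (1/2) * (g x)\<^sup>2 * a x) + (1 / (2*t)) * integral {\<alpha>..\<beta>} (\<lambda>x. 1 / a x)"
    by (subst integral_add[OF icm[OF i1] icm[OF ia]]) (simp only: integral_mult_right)
  finally have "\<delta> \<le> t * integral {\<alpha>..\<beta>} (\<lambda>x. (1/2) * (g x)\<^sup>2 * a x) + (1 / (2*t)) * integral {\<alpha>..\<beta>} (\<lambda>x. 1 / a x)"
    using intg by simp
  moreover have "t * integral {\<alpha>..\<beta>} (\<lambda>x. (1/2) * (g x)\<^sup>2 * a x) \<le> t * \<epsilon>"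
    using P t by simp
  ultimately have "\<delta> \<le> t * \<epsilon> + (1 / (2*t)) * integral {\<alpha>..\<beta>} (\<lambda>x. 1 / a x)" by linarith
  then have "\<delta> / 2 \<le> (\<epsilon> / \<delta>) * integral {\<alpha>..\<beta>} (\<lambda>x. 1 / a x)"
    using d eps unfolding t_def by (simp add: field_simps)
  then have "\<delta>\<^sup>2 / (2*\<epsilon>) \<le> integral {\<alpha>..\<beta>} (\<lambda>x. 1 / a x)"
    using d eps by (simp add: field_simps power2_eq_square)
  with ab Bb show ?thesis by blast
qed


lemma dir1:
  assumes lim: "Liminf at_top (\<lambda>L. ereal (Phi a b G m L)) = 0"
  shows "\<exists>\<alpha> \<beta> :: nat \<Rightarrow> real. (\<forall>n. \<alpha> n < \<beta> n) \<and>
       filterlim (\<lambda>n. integral {\<alpha> n..\<beta> n} (\<lambda>x. 1 / a x)) at_top sequentially \<and>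
       ((\<lambda>n. integral {\<alpha> n..\<beta> n} b) \<longlongrightarrow> 0) sequentially"
proof -
  define \<delta> where "\<delta> = min m M / 2"
  have d: "0 < \<delta>" "\<delta> < m" "\<delta> < M" unfolding \<delta>_def using mpos Mpos by auto
  have "\<exists>x\<in>{0..\<delta>}. \<forall>y\<in>{0..\<delta>}. G x \<le> G y"
    by (rule continuous_attains_inf) (use d in \<open>auto intro: continuous_on_subset[OF cG]\<close>)
  then obtain s0 where s0: "s0 \<in> {0..\<delta>}" "\<And>s. s \<in> {0..\<delta>} \<Longrightarrow> G s0 \<le> G s"
    by blast
  define c where "c = G s0"
  have c: "c > 0" unfolding c_def using Gpos[of s0] s0(1) d by auto
  have cle: "\<And>s. 0 \<le> s \<Longrightarrow> s \<le> \<delta> \<Longrightarrow> c \<le> G s" unfolding c_def using s0 by auto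
  have exn: "\<exists>p. fst p < snd p \<and> real (Suc n) \<le> integral {fst p..snd p} (\<lambda>x. 1 / a x)
     \<and> integral {fst p..snd p} b \<le> (\<delta>\<^sup>2 / (2*c)) * inverse (real (Suc n))
     \<and> 0 \<le> integral {fst p..snd p} b" for n
  proof -
    define \<epsilon> where "\<epsilon> = \<delta>\<^sup>2 / (2 * real (Suc n))"
    have eps: "\<epsilon> > 0" unfolding \<epsilon>_def using d by simp
    obtain L where L: "L \<ge> 1" "Phi a b G m L < \<epsilon>" using liminf_zero_imp[OF lim eps] by blast
    then obtain u g where ug: "H1m m L u g" "energy a b G L u g < \<epsilon>"
      using Phi_facts(3)[of L \<epsilon>] by auto
    obtain \<alpha> \<beta> where ab: "\<alpha> < \<beta>" "\<delta>\<^sup>2 / (2*\<epsilon>) \<le> integral {\<alpha>..\<beta>} (\<lambda>x. 1 / a x)"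
        "integral {\<alpha>..\<beta>} b \<le> \<epsilon> / c"
      using crossing[OF _ ug d(1,2) c cle] L by auto
    have "\<delta>\<^sup>2 / (2*\<epsilon>) = real (Suc n)" unfolding \<epsilon>_def using d by (simp add: field_simps)
    moreover have "\<epsilon> / c = (\<delta>\<^sup>2 / (2*c)) * inverse (real (Suc n))" unfolding \<epsilon>_def
      using c by (simp add: field_simps)
    moreover have "0 \<le> integral {\<alpha>..\<beta>} b"
      by (rule integral_nonneg, rule integrable_continuous_interval, rule continuous_on_subset[OF cb])
         (auto simp: less_imp_le[OF bpos])
    ultimately show ?thesis using ab by (intro exI[of _ "(\<alpha>, \<beta>)"]) auto
  qed
  obtain p where p: "\<And>n. fst (p n) < snd (p n) \<and> real (Suc n) \<le> integral {fst (p n)..snd (p n)} (\<lambda>x. 1 / a x)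
     \<and> integral {fst (p n)..snd (p n)} b \<le> (\<delta>\<^sup>2 / (2*c)) * inverse (real (Suc n))
     \<and> 0 \<le> integral {fst (p n)..snd (p n)} b" using exn by metis
  have "filterlim (\<lambda>n. integral {fst (p n)..snd (p n)} (\<lambda>x. 1 / a x)) at_top sequentially"
    by (rule filterlim_at_top_mono[OF filterlim_real_sequentially])
       (intro always_eventually allI order_trans[OF _ p[THEN conjunct2, THEN conjunct1]], simp)
  moreover have "((\<lambda>n. integral {fst (p n)..snd (p n)} b) \<longlongrightarrow> 0) sequentially"
  proof (rule tendsto_sandwich[of "\<lambda>_. 0" _ _ "\<lambda>n. (\<delta>\<^sup>2 / (2*c)) * inverse (real (Suc n))"])
    show "((\<lambda>n. (\<delta>\<^sup>2 / (2*c)) * inverse (real (Suc n))) \<longlongrightarrow> 0) sequentially"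
      by (rule tendsto_mult_right_zero[OF LIMSEQ_inverse_real_of_nat])
    show "((\<lambda>_. 0::real) \<longlongrightarrow> 0) sequentially" by simp
  qed (intro always_eventually allI; use p in blast)+
  ultimately show ?thesis using p by (intro exI[of _ "\<lambda>n. fst (p n)"] exI[of _ "\<lambda>n. snd (p n)"]) auto
qed

lemma construct:
  assumes ab: "0 \<le> \<alpha>" "\<alpha> < \<beta>" and K: "K \<ge> 0" "\<And>s. \<bar>s\<bar> \<le> m + M \<Longrightarrow> G s \<le> K"
    and I1: "integral {-\<beta>..-\<alpha>} (\<lambda>x. 1 / a x) > 0" and I2: "integral {\<alpha>..\<beta>} (\<lambda>x. 1 / a x) > 0"
  shows "Phi a b G m \<beta> \<le> (m+M)\<^sup>2 / (2 * integral {-\<beta>..-\<alpha>} (\<lambda>x. 1 / a x))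
      + (m-M)\<^sup>2 / (2 * integral {\<alpha>..\<beta>} (\<lambda>x. 1 / a x))
      + K * (integral {-\<beta>..-\<alpha>} b + integral {\<alpha>..\<beta>} b)"
proof -
  have bpos': "\<beta> > 0" using ab by simp
  define F where "F x = integral {-\<beta>..x} (\<lambda>t. 1 / a t)" for x
  define I\<^sub>1 where "I\<^sub>1 = integral {-\<beta>..-\<alpha>} (\<lambda>x. 1 / a x)"
  define I\<^sub>2 where "I\<^sub>2 = integral {\<alpha>..\<beta>} (\<lambda>x. 1 / a x)"
  have ca1: "continuous_on S (\<lambda>t. 1 / a t)" for S
    by (intro continuous_on_divide continuous_on_const continuous_on_subset[OF ca])
       (auto simp: less_imp_neq[OF apos, symmetric])
  have ia: "(\<lambda>t. 1 / a t) integrable_on {x..y}" for x y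
    by (rule integrable_continuous_interval[OF ca1])
  have ib: "b integrable_on {x..y}" for x y
    by (rule integrable_continuous_interval, rule continuous_on_subset[OF cb]) auto
  have Fc: "continuous_on {-\<beta>..\<beta>} F" unfolding F_def
    by (rule indefinite_integral_continuous_1[OF ia])
  have Fd: "(F has_real_derivative 1 / a y) (at y)" if "-\<beta> < y" "y < \<beta>" for y
  proof -
    have "(F has_real_derivative 1 / a y) (at y within {-\<beta>..\<beta>})" unfolding F_def
      by (rule integral_has_real_derivative[OF ca1]) (use that in auto)
    then show ?thesis using at_within_Icc_at[OF that] by simp
  qed
  have Fm: "F x \<le> F y \<and> F y - F x = integral {x..y} (\<lambda>t. 1 / a t)" if "-\<beta> \<le> x" "x \<le> y" "y \<le> \<beta>" for x y
  proof -
    have "integral {-\<beta>..x} (\<lambda>t. 1 / a t) + integral {x..y} (\<lambda>t. 1 / a t) = integral {-\<beta>..y} (\<lambda>t. 1 / a t)"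
      by (rule Henstock_Kurzweil_Integration.integral_combine[OF that(1,2) ia])
    moreover have "0 \<le> integral {x..y} (\<lambda>t. 1 / a t)"
      by (rule integral_nonneg[OF ia]) (simp add: less_imp_le[OF apos])
    ultimately show ?thesis unfolding F_def by simp
  qed
  have F0: "F (-\<beta>) = 0" unfolding F_def by simp
  have FI1: "F (-\<alpha>) = I\<^sub>1" unfolding F_def I\<^sub>1_def by simp
  have FI2: "F \<beta> - F \<alpha> = I\<^sub>2" unfolding I\<^sub>2_def using Fm[of \<alpha> \<beta>] ab by simp
  have I1p: "I\<^sub>1 > 0" and I2p: "I\<^sub>2 > 0" using I1 I2 unfolding I\<^sub>1_def I\<^sub>2_def by auto
  define c1 where "c1 = (m + M) / I\<^sub>1"
  define c2 where "c2 = (m - M) / I\<^sub>2"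
  have c1I: "c1 * I\<^sub>1 = m + M" and c2I: "c2 * I\<^sub>2 = m - M"
    unfolding c1_def c2_def using I1p I2p by auto
  define u where "u x = -m + c1 * F (min x (-\<alpha>)) + c2 * (F (max x \<alpha>) - F \<alpha>)" for x
  define g where "g x = (if x < -\<alpha> then c1 / a x else if x \<le> \<alpha> then 0 else c2 / a x)" for x
  have um: "u (-\<beta>) = -m" unfolding u_def using ab F0 by (simp add: min_def max_def)
  have uL: "u \<beta> = m" unfolding u_def using ab FI1 FI2 c1I c2I by (simp add: min_def max_def)
  have uM: "u x = M" if "-\<alpha> \<le> x" "x \<le> \<alpha>" for x
    unfolding u_def using that FI1 c1I by (simp add: min_def max_def)
  have uc: "continuous_on {-\<beta>..\<beta>} u" unfolding u_def
    by (intro continuous_on_add continuous_on_mult continuous_on_const continuous_on_diff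
        continuous_on_compose2[OF Fc] continuous_on_min continuous_on_max continuous_on_id)
       (use ab in auto)
  have ud: "(u has_real_derivative g y) (at y)" if y: "-\<beta> < y" "y < \<beta>" "y \<noteq> -\<alpha>" "y \<noteq> \<alpha>" for y
  proof -
    consider "y < -\<alpha>" | "-\<alpha> < y \<and> y < \<alpha>" | "\<alpha> < y" using y by linarith
    then show ?thesis
    proof cases
      case 1
      have dF: "(F has_real_derivative 1 / a y) (at y)" using Fd y by auto
      have "((\<lambda>z. -m + c1 * F z) has_real_derivative c1 * (1 / a y)) (at y)"
        using DERIV_add[OF DERIV_const[of "-m"] DERIV_cmult[OF dF, of c1]] by simp
      then have "((\<lambda>z. -m + c1 * F z) has_real_derivative g y) (at y)"
        using 1 unfolding g_def by simp
      then show ?thesis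
        by (rule has_field_derivative_transform_within_open[where S="{..<-\<alpha>}"])
           (use 1 ab in \<open>auto simp: u_def min_def max_def\<close>)
    next
      case 2
      have "((\<lambda>z. M) has_real_derivative g y) (at y)"
        using 2 unfolding g_def by (simp add: has_real_derivative_iff_has_vector_derivative)
      then show ?thesis
        by (rule has_field_derivative_transform_within_open[where S="{-\<alpha><..<\<alpha>}"])
           (use 2 uM in auto)
    next
      case 3
      have dF: "(F has_real_derivative 1 / a y) (at y)" using Fd y by auto
      have "((\<lambda>z. -m + c1 * F (-\<alpha>) + c2 * (F z - F \<alpha>)) has_real_derivative c2 * (1 / a y)) (at y)"
        using DERIV_add[OF DERIV_const[of "-m + c1 * F (-\<alpha>)"] DERIV_cmult[OF DERIV_diff[OF dF DERIV_const[of "F \<alpha>"]], of c2]]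
        by (simp add: add.assoc)
      then have "((\<lambda>z. -m + c1 * F (-\<alpha>) + c2 * (F z - F \<alpha>)) has_real_derivative g y) (at y)"
        using 3 ab unfolding g_def by simp
      then show ?thesis
        by (rule has_field_derivative_transform_within_open[where S="{\<alpha><..}"])
           (use 3 ab in \<open>auto simp: u_def min_def max_def\<close>)
    qed
  qed
  have ftc: "(g has_integral (u x - u (-\<beta>))) {-\<beta>..x}" if x: "-\<beta> \<le> x" "x \<le> \<beta>" for x
  proof (rule fundamental_theorem_of_calculus_interior_strong[of "{-\<alpha>, \<alpha>}"])
    show "continuous_on {-\<beta>..x} u" by (rule continuous_on_subset[OF uc]) (use x in auto)
    fix y assume "y \<in> {-\<beta><..<x} - {-\<alpha>, \<alpha>}"
    then show "(u has_vector_derivative g y) (at y)"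
      using ud[of y] x by (auto simp: has_real_derivative_iff_has_vector_derivative)
  qed (use x in auto)
  have "(g has_integral (u \<beta> - u (-\<beta>))) {-\<beta>..\<beta>}" using ftc[of \<beta>] ab by simp
  then have gi: "g integrable_on {-\<beta>..\<beta>}" unfolding integrable_on_def by blast
  have gbound: "\<bar>g x\<bar> \<le> (\<bar>c1\<bar> + \<bar>c2\<bar>) * (1 / a x)" for x
    using apos[of x] by (auto simp: g_def abs_divide field_simps)
  have gai: "g absolutely_integrable_on {-\<beta>..\<beta>}"
    by (rule absolutely_integrable_integrable_bound[OF _ gi icm[OF ia]]) (use gbound in simp)
  obtain Ba where Ba: "\<And>x. x \<in> {-\<beta>..\<beta>} \<Longrightarrow> norm (1 / a x) \<le> Ba"
    using compact_imp_bounded[OF compact_continuous_image[OF ca1 compact_Icc]]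
    unfolding bounded_iff by blast
  have "(\<lambda>x. g x * g x) absolutely_integrable_on {-\<beta>..\<beta>}"
  proof (rule absolutely_integrable_bounded_measurable_product_real[OF _ _ _ gai])
    show "g \<in> borel_measurable (lebesgue_on {-\<beta>..\<beta>})"
      by (rule absolutely_integrable_imp_borel_measurable[OF gai]) simp
    show "{-\<beta>..\<beta>} \<in> sets lebesgue" by simp
    show "bounded (g ` {-\<beta>..\<beta>})" unfolding bounded_iff
    proof (intro exI ballI)
      fix y assume "y \<in> g ` {-\<beta>..\<beta>}"
      then obtain x where x: "x \<in> {-\<beta>..\<beta>}" "y = g x" by blast
      have "\<bar>g x\<bar> \<le> (\<bar>c1\<bar> + \<bar>c2\<bar>) * (1 / a x)" by (rule gbound)
      also have "\<dots> \<le> (\<bar>c1\<bar> + \<bar>c2\<bar>) * Ba" using Ba[OF x(1)] apos[of x]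
        by (intro mult_left_mono) auto
      finally show "norm y \<le> (\<bar>c1\<bar> + \<bar>c2\<bar>) * Ba" using x by simp
    qed
  qed
  then have g2: "(\<lambda>x. (g x)\<^sup>2) integrable_on {-\<beta>..\<beta>}"
    by (simp add: power2_eq_square absolutely_integrable_on_def)
  have uint: "u x = u (-\<beta>) + integral {-\<beta>..x} g" if "x \<in> {-\<beta>..\<beta>}" for x
    using integral_unique[OF ftc[of x]] that by simp
  have H1: "H1_weak \<beta> u g" unfolding H1_weak_def using gai g2 uint by blast
  have H: "H1m m \<beta> u g" unfolding H1m_def using H1 um uL by blast
  define h where "h x = (1/2) * (g x)\<^sup>2 * a x + G (u x) * b x" for x
  note f = H1_facts[OF ca cb cG H1]
  have hi: "h integrable_on {-\<beta>..\<beta>}" unfolding h_def by (rule integrable_add[OF f(3) f(4)])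
  have hi1: "h integrable_on {-\<beta>..\<alpha>}" by (rule integrable_subinterval_real[OF hi]) (use ab in auto)
  have "integral {-\<beta>..-\<alpha>} h + integral {-\<alpha>..\<alpha>} h = integral {-\<beta>..\<alpha>} h"
    by (rule Henstock_Kurzweil_Integration.integral_combine[OF _ _ hi1]) (use ab in auto)
  moreover have "integral {-\<beta>..\<alpha>} h + integral {\<alpha>..\<beta>} h = integral {-\<beta>..\<beta>} h"
    by (rule Henstock_Kurzweil_Integration.integral_combine[OF _ _ hi]) (use ab in auto)
  ultimately have esplit: "energy a b G \<beta> u g = integral {-\<beta>..-\<alpha>} h + integral {-\<alpha>..\<alpha>} h + integral {\<alpha>..\<beta>} h"
    unfolding energy_def h_def[abs_def] by simp
  have mid: "integral {-\<alpha>..\<alpha>} h = 0"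
  proof -
    have "integral {-\<alpha>..\<alpha>} h = integral {-\<alpha>..\<alpha>} (\<lambda>x. 0)"
      by (rule integral_cong) (auto simp: h_def g_def uM GM)
    then show ?thesis by simp
  qed
  have left: "integral {-\<beta>..-\<alpha>} h \<le> (1/2) * c1\<^sup>2 * I\<^sub>1 + K * integral {-\<beta>..-\<alpha>} b"
  proof -
    have "integral {-\<beta>..-\<alpha>} h \<le> integral {-\<beta>..-\<alpha>} (\<lambda>x. ((1/2) * c1\<^sup>2) * (1 / a x) + K * b x)"
    proof (rule integral_le[OF integrable_subinterval_real[OF hi] integrable_add[OF icm[OF ia] icm[OF ib]]])
      show "{-\<beta>..-\<alpha>} \<subseteq> {-\<beta>..\<beta>}" using ab by auto
      fix x assume x: "x \<in> {-\<beta>..-\<alpha>}"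
      have gx: "(1/2) * (g x)\<^sup>2 * a x \<le> (1/2) * c1\<^sup>2 * (1 / a x)"
      proof (cases "x < -\<alpha>")
        case True then show ?thesis using apos[of x] by (simp add: g_def power2_eq_square field_simps)
      next
        case False then show ?thesis using ab apos[of x] x by (simp add: g_def)
      qed
      have Fx: "0 \<le> F x" "F x \<le> I\<^sub>1" using Fm[of "-\<beta>" x] Fm[of x "-\<alpha>"] x ab F0 FI1 by auto
      have "u x = -m + c1 * F x" using x ab unfolding u_def by (simp add: min_def max_def)
      moreover have c1nn: "c1 \<ge> 0" unfolding c1_def using I1p mpos Mpos by simp
      moreover have "0 \<le> c1 * F x" using c1nn Fx by simp
      moreover have "c1 * F x \<le> m + M" using mult_left_mono[OF Fx(2) c1nn] c1I by simp
      ultimately have "\<bar>u x\<bar> \<le> m + M" using mpos Mpos by auto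
      then have "G (u x) * b x \<le> K * b x" using K(2) bpos[of x] by (simp add: mult_right_mono)
      with gx show "h x \<le> ((1/2) * c1\<^sup>2) * (1 / a x) + K * b x" unfolding h_def by simp
    qed
    also have "\<dots> = (1/2) * c1\<^sup>2 * I\<^sub>1 + K * integral {-\<beta>..-\<alpha>} b"
      unfolding I\<^sub>1_def by (subst integral_add[OF icm[OF ia] icm[OF ib]]) (simp only: integral_mult_right)
    finally show ?thesis .
  qed
  have right: "integral {\<alpha>..\<beta>} h \<le> (1/2) * c2\<^sup>2 * I\<^sub>2 + K * integral {\<alpha>..\<beta>} b"
  proof -
    have "integral {\<alpha>..\<beta>} h \<le> integral {\<alpha>..\<beta>} (\<lambda>x. ((1/2) * c2\<^sup>2) * (1 / a x) + K * b x)"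
    proof (rule integral_le[OF integrable_subinterval_real[OF hi] integrable_add[OF icm[OF ia] icm[OF ib]]])
      show "{\<alpha>..\<beta>} \<subseteq> {-\<beta>..\<beta>}" using ab by auto
      fix x assume x: "x \<in> {\<alpha>..\<beta>}"
      have gx: "(1/2) * (g x)\<^sup>2 * a x \<le> (1/2) * c2\<^sup>2 * (1 / a x)"
      proof (cases "x \<le> \<alpha>")
        case True then show ?thesis using ab apos[of x] x by (simp add: g_def)
      next
        case False then show ?thesis using ab apos[of x] by (simp add: g_def power2_eq_square field_simps)
      qed
      have Fx: "0 \<le> F x - F \<alpha>" "F x - F \<alpha> \<le> I\<^sub>2" using Fm[of \<alpha> x] Fm[of x \<beta>] x ab FI2 by auto
      define s where "s = (F x - F \<alpha>) / I\<^sub>2"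
      have s: "0 \<le> s" "s \<le> 1" unfolding s_def using Fx I2p by auto
      have mm: "min x (-\<alpha>) = -\<alpha>" "max x \<alpha> = x" using x ab by auto
      have "u x = M + c2 * (F x - F \<alpha>)" using FI1 c1I unfolding u_def mm by simp
      also have "c2 * (F x - F \<alpha>) = (m - M) * s" unfolding c2_def s_def by simp
      finally have "u x = (1 - s) * M + s * m" by (simp add: algebra_simps)
      moreover have "0 \<le> (1 - s) * M" "0 \<le> s * m" "(1 - s) * M \<le> M" "s * m \<le> m"
        using s mpos Mpos by (auto simp: mult_left_le_one_le mult_le_cancel_right1)
      ultimately have "\<bar>u x\<bar> \<le> m + M" by auto
      then have "G (u x) * b x \<le> K * b x" using K(2) bpos[of x] by (simp add: mult_right_mono)
      with gx show "h x \<le> ((1/2) * c2\<^sup>2) * (1 / a x) + K * b x" unfolding h_def by simp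
    qed
    also have "\<dots> = (1/2) * c2\<^sup>2 * I\<^sub>2 + K * integral {\<alpha>..\<beta>} b"
      unfolding I\<^sub>2_def by (subst integral_add[OF icm[OF ia] icm[OF ib]]) (simp only: integral_mult_right)
    finally show ?thesis .
  qed
  have "(1/2) * c1\<^sup>2 * I\<^sub>1 = (m+M)\<^sup>2 / (2 * I\<^sub>1)" unfolding c1_def using I1p
    by (simp add: field_simps power2_eq_square)
  moreover have "(1/2) * c2\<^sup>2 * I\<^sub>2 = (m-M)\<^sup>2 / (2 * I\<^sub>2)" unfolding c2_def using I2p
    by (simp add: field_simps power2_eq_square)
  ultimately have "energy a b G \<beta> u g \<le> (m+M)\<^sup>2 / (2 * I\<^sub>1) + (m-M)\<^sup>2 / (2 * I\<^sub>2)
      + K * (integral {-\<beta>..-\<alpha>} b + integral {\<alpha>..\<beta>} b)"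
    using esplit mid left right by (simp add: algebra_simps)
  moreover have "Phi a b G m \<beta> \<le> energy a b G \<beta> u g" by (rule Phi_facts(2)[OF bpos' H])
  ultimately show ?thesis unfolding I\<^sub>1_def I\<^sub>2_def by linarith
qed

lemma even_int:
  fixes f :: "real \<Rightarrow> real"
  assumes "\<And>x. f (-x) = f x"
  shows "integral {-y..-x} f = integral {x..y::real} f"
  using Henstock_Kurzweil_Integration.integral_reflect_real[of y x f] assms by simp

lemma reflect:
  assumes "x < y"
  shows "\<exists>x' y'. 0 \<le> x' \<and> x' < y' \<and> integral {x..y} (\<lambda>t. 1 / a t) / 2 \<le> integral {x'..y'} (\<lambda>t. 1 / a t)
     \<and> integral {x'..y'} b \<le> integral {x..y} b"
proof -
  have ca1: "continuous_on S (\<lambda>t. 1 / a t)" for S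
    by (intro continuous_on_divide continuous_on_const continuous_on_subset[OF ca])
       (auto simp: less_imp_neq[OF apos, symmetric])
  have ia: "(\<lambda>t. 1 / a t) integrable_on {p..q}" for p q
    by (rule integrable_continuous_interval[OF ca1])
  have ib: "b integrable_on {p..q}" for p q
    by (rule integrable_continuous_interval, rule continuous_on_subset[OF cb]) auto
  have nna: "0 \<le> integral {p..q} (\<lambda>t. 1 / a t)" for p q
    by (rule integral_nonneg[OF ia]) (simp add: less_imp_le[OF apos])
  have nnb: "0 \<le> integral {p..q} b" for p q
    by (rule integral_nonneg[OF ib]) (simp add: less_imp_le[OF bpos])
  have ea1: "\<And>t. 1 / a (-t) = 1 / a t" using ea by simp
  consider "0 \<le> x" | "y \<le> 0" | "x < 0 \<and> 0 < y" by linarith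
  then show ?thesis
  proof cases
    case 1 then show ?thesis using assms nna[of x y] by (intro exI[of _ x] exI[of _ y]) auto
  next
    case 2
    have "integral {-y..-x} (\<lambda>t. 1 / a t) = integral {x..y} (\<lambda>t. 1 / a t)"
      by (rule even_int[of "\<lambda>t. 1 / a t", OF ea1])
    moreover have "integral {-y..-x} b = integral {x..y} b" by (rule even_int[of b, OF eb])
    ultimately show ?thesis using 2 assms nna[of x y] by (intro exI[of _ "-y"] exI[of _ "-x"]) auto
  next
    case 3
    have sa: "integral {x..0} (\<lambda>t. 1 / a t) + integral {0..y} (\<lambda>t. 1 / a t) = integral {x..y} (\<lambda>t. 1 / a t)"
      by (rule Henstock_Kurzweil_Integration.integral_combine[OF _ _ ia]) (use 3 in auto)
    have sb: "integral {x..0} b + integral {0..y} b = integral {x..y} b"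
      by (rule Henstock_Kurzweil_Integration.integral_combine[OF _ _ ib]) (use 3 in auto)
    show ?thesis
    proof (cases "integral {x..y} (\<lambda>t. 1 / a t) / 2 \<le> integral {0..y} (\<lambda>t. 1 / a t)")
      case True then show ?thesis using 3 sb nnb[of x 0] by (intro exI[of _ 0] exI[of _ y]) auto
    next
      case False
      have "integral {-0..-x} (\<lambda>t. 1 / a t) = integral {x..0} (\<lambda>t. 1 / a t)"
        by (rule even_int[of "\<lambda>t. 1 / a t", OF ea1])
      moreover have "integral {-0..-x} b = integral {x..0} b" by (rule even_int[of b, OF eb])
      ultimately show ?thesis using 3 sa sb False nnb[of 0 y]
        by (intro exI[of _ 0] exI[of _ "-x"]) auto
    qed
  qed
qed

lemma dir2:
  assumes al: "\<forall>n. \<alpha> n < \<beta> n"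
    and lim1: "filterlim (\<lambda>n. integral {\<alpha> n..\<beta> n} (\<lambda>x. 1 / a x)) at_top sequentially"
    and lim2: "((\<lambda>n. integral {\<alpha> n..\<beta> n} b) \<longlongrightarrow> 0) sequentially"
  shows "Liminf at_top (\<lambda>L. ereal (Phi a b G m L)) = 0"
proof (rule liminf_zero_intro)
  show "eventually (\<lambda>L. 0 \<le> Phi a b G m L) at_top"
    unfolding eventually_at_top_linorder by (rule exI[of _ 1]) (auto intro: Phi_facts(1))
  have ca1: "continuous_on S (\<lambda>t. 1 / a t)" for S
    by (intro continuous_on_divide continuous_on_const continuous_on_subset[OF ca])
       (auto simp: less_imp_neq[OF apos, symmetric])
  have ia: "(\<lambda>t. 1 / a t) integrable_on {p..q}" for p q
    by (rule integrable_continuous_interval[OF ca1])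
  have ib: "b integrable_on {p..q}" for p q
    by (rule integrable_continuous_interval, rule continuous_on_subset[OF cb]) auto
  have nnb: "0 \<le> integral {p..q} b" for p q
    by (rule integral_nonneg[OF ib]) (simp add: less_imp_le[OF bpos])
  have ea1: "\<And>t. 1 / a (-t) = 1 / a t" using ea by simp
  have "\<exists>x\<in>{-(m+M)..m+M}. \<forall>y\<in>{-(m+M)..m+M}. G y \<le> G x"
    by (rule continuous_attains_sup) (use mpos Mpos in \<open>auto intro: continuous_on_subset[OF cG]\<close>)
  then obtain s1 where s1: "\<And>s. s \<in> {-(m+M)..m+M} \<Longrightarrow> G s \<le> G s1" by blast
  define K where "K = G s1"
  have K: "K \<ge> 0" "\<And>s. \<bar>s\<bar> \<le> m + M \<Longrightarrow> G s \<le> K"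
    unfolding K_def using G_nonneg s1 by (auto simp: abs_le_iff)
  define C0 where "C0 = (m+M)\<^sup>2 + (m-M)\<^sup>2"
  have C0: "C0 \<ge> 0" unfolding C0_def by simp
  fix T \<epsilon> :: real assume eps: "\<epsilon> > 0"
  define CT where "CT = integral {0..max T 0} (\<lambda>t. 1 / a t)"
  define Z where "Z = max (2 * C0 / \<epsilon>) (2 * CT + 1)"
  have ev1: "eventually (\<lambda>n. Z \<le> integral {\<alpha> n..\<beta> n} (\<lambda>x. 1 / a x)) sequentially"
    using lim1 unfolding filterlim_at_top by blast
  have ev2: "eventually (\<lambda>n. dist (integral {\<alpha> n..\<beta> n} b) 0 < \<epsilon> / (4*K + 1)) sequentially"
    by (rule tendstoD[OF lim2]) (use eps K in simp)
  obtain n where n1: "Z \<le> integral {\<alpha> n..\<beta> n} (\<lambda>x. 1 / a x)"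
      and n2: "dist (integral {\<alpha> n..\<beta> n} b) 0 < \<epsilon> / (4*K + 1)"
    using eventually_happens'[OF _ eventually_conj[OF ev1 ev2]] by auto
  define An where "An = integral {\<alpha> n..\<beta> n} (\<lambda>x. 1 / a x)"
  define Bn where "Bn = integral {\<alpha> n..\<beta> n} b"
  obtain x y where xy: "0 \<le> x" "x < y" "An / 2 \<le> integral {x..y} (\<lambda>t. 1 / a t)"
      "integral {x..y} b \<le> Bn"
    using reflect[OF al[rule_format, of n]] unfolding An_def Bn_def by blast
  define A' where "A' = integral {x..y} (\<lambda>t. 1 / a t)"
  define B' where "B' = integral {x..y} b"
  have Zp: "Z \<ge> 1" unfolding Z_def CT_def
    using integral_nonneg[OF ia, of 0 "max T 0"] apos by (auto simp: less_imp_le)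
  have Ap: "A' > 0" "An / 2 \<le> A'" "An \<ge> Z" using xy Zp n1 unfolding A'_def An_def by auto
  have B': "0 \<le> B'" "B' \<le> Bn" "Bn < \<epsilon> / (4*K + 1)" using xy n2 nnb unfolding B'_def Bn_def by auto
  have rA: "integral {-y..-x} (\<lambda>t. 1 / a t) = A'" unfolding A'_def by (rule even_int[of "\<lambda>t. 1 / a t", OF ea1])
  have rB: "integral {-y..-x} b = B'" unfolding B'_def by (rule even_int[of b, OF eb])
  have "Phi a b G m y \<le> (m+M)\<^sup>2 / (2 * A') + (m-M)\<^sup>2 / (2 * A') + K * (B' + B')"
    using construct[OF xy(1,2) K] rA rB Ap unfolding A'_def B'_def by simp
  also have "\<dots> = C0 / (2 * A') + 2 * K * B'" unfolding C0_def by (simp add: add_divide_distrib)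
  also have "C0 / (2 * A') \<le> \<epsilon> / 2"
  proof -
    have "2 * C0 / \<epsilon> \<le> 2 * A'" using Ap unfolding Z_def by linarith
    then have "2 * C0 \<le> 2 * A' * \<epsilon>" using eps by (simp add: field_simps)
    then show ?thesis using Ap eps by (simp add: field_simps)
  qed
  also have "2 * K * B' \<le> \<epsilon> / 2"
  proof -
    have "2 * K * B' \<le> 2 * K * (\<epsilon> / (4*K + 1))" using B' K by (intro mult_left_mono) auto
    also have "\<dots> \<le> \<epsilon> / 2" using K eps by (simp add: field_simps)
    finally show ?thesis .
  qed
  finally have Py: "Phi a b G m y \<le> \<epsilon>" by simp
  have "y \<ge> T"
  proof (rule ccontr)
    assume "\<not> y \<ge> T"
    then have "{x..y} \<subseteq> {0..max T 0}" using xy by auto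
    then have "A' \<le> CT" unfolding A'_def CT_def
      by (intro integral_subset_le ia) (auto simp: less_imp_le[OF apos])
    then show False using Ap unfolding Z_def by linarith
  qed
  with Py show "\<exists>L\<ge>T. Phi a b G m L \<le> \<epsilon>" by blast
qed

end

theorem proposition5p9:
  fixes a b G :: "real \<Rightarrow> real" and M m :: real
  assumes "continuous_on UNIV a" "continuous_on UNIV b" "continuous_on UNIV G"
    and "\<And>x. a (-x) = a x" "\<And>x. b (-x) = b x" "\<And>x. G (-x) = G x"
    and "\<And>x. a x > 0" "\<And>x. b x > 0"
    and "M > 0" "G M = 0" "\<And>s. G s \<ge> G M" "\<And>s. 0 \<le> s \<Longrightarrow> s < M \<Longrightarrow> G s > 0"
    and "m > 0"
  shows "Liminf at_top (\<lambda>L. ereal (Phi a b G m L)) = 0 \<longleftrightarrow>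
    (\<exists>\<alpha> \<beta> :: nat \<Rightarrow> real. (\<forall>n. \<alpha> n < \<beta> n) \<and>
       filterlim (\<lambda>n. integral {\<alpha> n..\<beta> n} (\<lambda>x. 1 / a x)) at_top sequentially \<and>
       ((\<lambda>n. integral {\<alpha> n..\<beta> n} b) \<longlongrightarrow> 0) sequentially)"
proof -
  interpret setting a b G M m
    by (rule setting.intro) (fact assms)+
  show ?thesis using dir1 dir2 by blast
qed

end
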